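(* Let $a,b,\alpha,\beta$ be complex numbers with $2a-b\neq 0$ and $\beta a-\alpha b\neq 0$, let $n\ge1$ be an integer, and let $s$ be a square root of $\frac{b+2a}{b-2a}$. Then \[ \Psi\left(\begin{array}{cc|c} a & b & n \\ \alpha & \beta & 0 \end{array}\right)=\Psi(a,b,n)=\frac{(2a-b)^{\lfloor n/2\rfloor}}{2^n}\Big\{(1+s)^n+(1-s)^n\Big\}, \] and, if moreover $b+2a\neq 0$, \[ \Phi\left(\begin{array}{cc|c} a & b & n \\ \alpha & \beta & 0 \end{array}\right)=\Phi(a,b,n)=\frac{(2a-b)^{\lfloor (n-1)/2\rfloor}}{2^n s}\Big\{(1+s)^n-(1-s)^n\Big\}. \]
   Context: $\delta(m)=1$ for $m$ odd, $\delta(m)=0$ for $m$ even; $\lfloor\cdot\rfloor$ is the floor. For $a,b$, the sequences $\Psi(a,b,n)$, $\Phi(a,b,n)$ ($n\ge0$) are defined by $\Psi(a,b,0)=2$, $\Psi(a,b,1)=1$, $\Psi(a,b,n+1)=(2a-b)^{\delta(n)}\Psi(a,b,n)-a\Psi(a,b,n-1)$, and $\Phi(a,b,0)=0$, $\Phi(a,b,1)=1$, $\Phi(a,b,n+1)=(2a-b)^{\delta(n+1)}\Phi(a,b,n)-a\Phi(a,b,n-1)$ for $n\ge1$. For indeterminates $a,b,\alpha,\beta$ and $n\ge1$, $\Psi\left(\begin{array}{cc|c} a & b & n \\ \alpha & \beta & r \end{array}\right)$ ($0\le r\le\lfloor n/2\rfloor$) and $\Phi\left(\begin{array}{cc|c}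 a & b & n \\ \alpha & \beta & r \end{array}\right)$ ($0\le r\le\lfloor (n-1)/2\rfloor$) denote the unique polynomials in $\mathbb{Z}[a,b,\alpha,\beta]$ such that, identically in $x,y$, $(\beta a-\alpha b)^{\lfloor n/2\rfloor}\frac{x^n+y^n}{(x+y)^{\delta(n)}}=\sum_{r}\Psi\left(\begin{array}{cc|c} a & b & n \\ \alpha & \beta & r \end{array}\right)(\alpha x^2+\beta xy+\alpha y^2)^{\lfloor n/2\rfloor-r}(ax^2+bxy+ay^2)^r$ and $(\beta a-\alpha b)^{\lfloor (n-1)/2\rfloor}\frac{x^n-y^n}{(x-y)(x+y)^{\delta(n-1)}}=\sum_{r}\Phi\left(\begin{array}{cc|c} a & b & n \\ \alpha & \beta & r \end{array}\right)(\alpha x^2+\beta xy+\alpha y^2)^{\lfloor (n-1)/2\rfloor-r}(ax^2+bxy+ay^2)^r$ (uniqueness holds since the two quadratic forms are algebraically independent when $\beta a-\alpha b\ne0$). For numerical $a,b,\alpha,\beta$ these polynomials are evaluated. *)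

theory Defs
  imports Complex_Main
begin

definition delta :: "nat \<Rightarrow> nat" where
  "delta m = (if odd m then 1 else 0)"

fun Psi_seq :: "complex \<Rightarrow> complex \<Rightarrow> nat \<Rightarrow> complex" where
  "Psi_seq a b 0 = 2"
| "Psi_seq a b (Suc 0) = 1"
| "Psi_seq a b (Suc (Suc k)) =
     (2*a - b) ^ delta (Suc k) * Psi_seq a b (Suc k) - a * Psi_seq a b k"

fun Phi_seq :: "complex \<Rightarrow> complex \<Rightarrow> nat \<Rightarrow> complex" where
  "Phi_seq a b 0 = 0"
| "Phi_seq a b (Suc 0) = 1"
| "Phi_seq a b (Suc (Suc k)) =
     (2*a - b) ^ delta (Suc (Suc k)) * Phi_seq a b (Suc k) - a * Phi_seq a b k"

text \<open>The coefficients Psi(a b n | alpha beta r), evaluated at numerical a,b,alpha,beta: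
  the unique coefficient family (indexed by r \<le> floor(n/2), zero beyond) such that,
  identically in x,y (the division by (x+y)^delta(n) being cleared),
  (beta a - alpha b)^floor(n/2) (x^n+y^n)
    = (x+y)^delta(n) * sum_r c_r (alpha x^2+beta xy+alpha y^2)^(floor(n/2)-r) (a x^2+b xy+a y^2)^r.\<close>
definition Psi_coef ::
  "complex \<Rightarrow> complex \<Rightarrow> complex \<Rightarrow> complex \<Rightarrow> nat \<Rightarrow> nat \<Rightarrow> complex" where
  "Psi_coef a b \<alpha> \<beta> n =
     (THE c. (\<forall>r. n div 2 < r \<longrightarrow> c r = 0) \<and>
        (\<forall>x y::complex. (\<beta>*a - \<alpha>*b) ^ (n div 2) * (x^n + y^n) =
           (x + y) ^ delta n *
           (\<Sum>r\<le>n div 2. c r * (\<alpha>*x^2 + \<beta>*x*y + \<alpha>*y^2) ^ (n div 2 - r)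
                                 * (a*x^2 + b*x*y + a*y^2) ^ r)))"

definition Phi_coef ::
  "complex \<Rightarrow> complex \<Rightarrow> complex \<Rightarrow> complex \<Rightarrow> nat \<Rightarrow> nat \<Rightarrow> complex" where
  "Phi_coef a b \<alpha> \<beta> n =
     (THE c. (\<forall>r. (n - 1) div 2 < r \<longrightarrow> c r = 0) \<and>
        (\<forall>x y::complex. (\<beta>*a - \<alpha>*b) ^ ((n - 1) div 2) * (x^n - y^n) =
           (x - y) * (x + y) ^ delta (n - 1) *
           (\<Sum>r\<le>(n - 1) div 2. c r * (\<alpha>*x^2 + \<beta>*x*y + \<alpha>*y^2) ^ ((n - 1) div 2 - r)
                                 * (a*x^2 + b*x*y + a*y^2) ^ r)))"

end

theory Submission
  imports Defs
begin

definition rep :: "complex \<Rightarrow> complex \<Rightarrow> complex \<Rightarrow> complex \<Rightarrow> nat \<Rightarrow> (complex \<Rightarrow> complex \<Rightarrow> complex) \<Rightarrow> bool" where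
  "rep a b \<alpha> \<beta> m G \<longleftrightarrow> (\<exists>c. \<forall>x y. G x y = (\<Sum>r\<le>m. c r * (\<alpha>*x^2 + \<beta>*x*y + \<alpha>*y^2) ^ (m - r) * (a*x^2 + b*x*y + a*y^2) ^ r))"

lemma rep_cong: "rep a b \<alpha> \<beta> m F \<Longrightarrow> (\<And>x y. F x y = G x y) \<Longrightarrow> rep a b \<alpha> \<beta> m G"
  unfolding rep_def by auto

lemma rep_add: "rep a b \<alpha> \<beta> m F \<Longrightarrow> rep a b \<alpha> \<beta> m G \<Longrightarrow> rep a b \<alpha> \<beta> m (\<lambda>x y. F x y + G x y)"
  unfolding rep_def
proof (elim exE)
  fix c d assume c: "\<forall>x y. F x y = (\<Sum>r\<le>m. c r * (\<alpha>*x^2 + \<beta>*x*y + \<alpha>*y^2) ^ (m - r) * (a*x^2 + b*x*y + a*y^2) ^ r)"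
    and d: "\<forall>x y. G x y = (\<Sum>r\<le>m. d r * (\<alpha>*x^2 + \<beta>*x*y + \<alpha>*y^2) ^ (m - r) * (a*x^2 + b*x*y + a*y^2) ^ r)"
  show "\<exists>e. \<forall>x y. F x y + G x y = (\<Sum>r\<le>m. e r * (\<alpha>*x^2 + \<beta>*x*y + \<alpha>*y^2) ^ (m - r) * (a*x^2 + b*x*y + a*y^2) ^ r)"
    by (rule exI[of _ "\<lambda>r. c r + d r"]) (simp add: c d sum.distrib[symmetric] ring_distribs)
qed

lemma rep_smult: "rep a b \<alpha> \<beta> m F \<Longrightarrow> rep a b \<alpha> \<beta> m (\<lambda>x y. k * F x y)"
  unfolding rep_def
proof (elim exE)
  fix c assume c: "\<forall>x y. F x y = (\<Sum>r\<le>m. c r * (\<alpha>*x^2 + \<beta>*x*y + \<alpha>*y^2) ^ (m - r) * (a*x^2 + b*x*y + a*y^2) ^ r)"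
  show "\<exists>e. \<forall>x y. k * F x y = (\<Sum>r\<le>m. e r * (\<alpha>*x^2 + \<beta>*x*y + \<alpha>*y^2) ^ (m - r) * (a*x^2 + b*x*y + a*y^2) ^ r)"
    by (rule exI[of _ "\<lambda>r. k * c r"]) (simp add: c sum_distrib_left mult.assoc)
qed

lemma rep_Q1: "rep a b \<alpha> \<beta> m F \<Longrightarrow> rep a b \<alpha> \<beta> (Suc m) (\<lambda>x y. (\<alpha>*x^2 + \<beta>*x*y + \<alpha>*y^2) * F x y)"
  unfolding rep_def
proof (elim exE)
  fix c assume c: "\<forall>x y. F x y = (\<Sum>r\<le>m. c r * (\<alpha>*x^2 + \<beta>*x*y + \<alpha>*y^2) ^ (m - r) * (a*x^2 + b*x*y + a*y^2) ^ r)"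
  show "\<exists>e. \<forall>x y. (\<alpha>*x^2 + \<beta>*x*y + \<alpha>*y^2) * F x y = (\<Sum>r\<le>Suc m. e r * (\<alpha>*x^2 + \<beta>*x*y + \<alpha>*y^2) ^ (Suc m - r) * (a*x^2 + b*x*y + a*y^2) ^ r)"
  proof (rule exI[of _ "\<lambda>r. if r \<le> m then c r else 0"], intro allI)
    fix x y :: complex
    have "(\<Sum>r\<le>Suc m. (if r \<le> m then c r else 0) * (\<alpha>*x^2 + \<beta>*x*y + \<alpha>*y^2) ^ (Suc m - r) * (a*x^2 + b*x*y + a*y^2) ^ r)
        = (\<Sum>r\<le>m. c r * (\<alpha>*x^2 + \<beta>*x*y + \<alpha>*y^2) ^ (Suc m - r) * (a*x^2 + b*x*y + a*y^2) ^ r)"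
      by simp
    also have "\<dots> = (\<Sum>r\<le>m. (\<alpha>*x^2 + \<beta>*x*y + \<alpha>*y^2) * (c r * (\<alpha>*x^2 + \<beta>*x*y + \<alpha>*y^2) ^ (m - r) * (a*x^2 + b*x*y + a*y^2) ^ r))"
      by (rule sum.cong) (auto simp: Suc_diff_le)
    finally show "(\<alpha>*x^2 + \<beta>*x*y + \<alpha>*y^2) * F x y = (\<Sum>r\<le>Suc m. (if r \<le> m then c r else 0) * (\<alpha>*x^2 + \<beta>*x*y + \<alpha>*y^2) ^ (Suc m - r) * (a*x^2 + b*x*y + a*y^2) ^ r)"
      by (simp add: c sum_distrib_left)
  qed
qed

lemma rep_Q2: "rep a b \<alpha> \<beta> m F \<Longrightarrow> rep a b \<alpha> \<beta> (Suc m) (\<lambda>x y. (a*x^2 + b*x*y + a*y^2) * F x y)"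
  unfolding rep_def
proof (elim exE)
  fix c assume c: "\<forall>x y. F x y = (\<Sum>r\<le>m. c r * (\<alpha>*x^2 + \<beta>*x*y + \<alpha>*y^2) ^ (m - r) * (a*x^2 + b*x*y + a*y^2) ^ r)"
  show "\<exists>e. \<forall>x y. (a*x^2 + b*x*y + a*y^2) * F x y = (\<Sum>r\<le>Suc m. e r * (\<alpha>*x^2 + \<beta>*x*y + \<alpha>*y^2) ^ (Suc m - r) * (a*x^2 + b*x*y + a*y^2) ^ r)"
  proof (rule exI[of _ "\<lambda>r. if r = 0 then 0 else c (r - 1)"], intro allI)
    fix x y :: complex
    have "(\<Sum>r\<le>Suc m. (if r = 0 then 0 else c (r - 1)) * (\<alpha>*x^2 + \<beta>*x*y + \<alpha>*y^2) ^ (Suc m - r) * (a*x^2 + b*x*y + a*y^2) ^ r)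
        = (\<Sum>r\<le>m. c r * (\<alpha>*x^2 + \<beta>*x*y + \<alpha>*y^2) ^ (m - r) * (a*x^2 + b*x*y + a*y^2) ^ Suc r)"
      by (simp only: sum.atMost_Suc_shift) simp
    also have "\<dots> = (\<Sum>r\<le>m. (a*x^2 + b*x*y + a*y^2) * (c r * (\<alpha>*x^2 + \<beta>*x*y + \<alpha>*y^2) ^ (m - r) * (a*x^2 + b*x*y + a*y^2) ^ r))"
      by (rule sum.cong) (auto simp: algebra_simps)
    finally show "(a*x^2 + b*x*y + a*y^2) * F x y = (\<Sum>r\<le>Suc m. (if r = 0 then 0 else c (r - 1)) * (\<alpha>*x^2 + \<beta>*x*y + \<alpha>*y^2) ^ (Suc m - r) * (a*x^2 + b*x*y + a*y^2) ^ r)"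
      by (simp add: c sum_distrib_left)
  qed
qed

lemma rep_lin: "rep a b \<alpha> \<beta> m F \<Longrightarrow> rep a b \<alpha> \<beta> (Suc m) (\<lambda>x y. (k1 * (\<alpha>*x^2 + \<beta>*x*y + \<alpha>*y^2) + k2 * (a*x^2 + b*x*y + a*y^2)) * F x y)"
  by (rule rep_cong[OF rep_add[OF rep_smult[OF rep_Q1] rep_smult[OF rep_Q2]]]) (auto simp: algebra_simps)

lemma rep_const: "rep a b \<alpha> \<beta> 0 (\<lambda>x y. k)"
  unfolding rep_def by (rule exI[of _ "\<lambda>r. k"]) simp

lemma rep_one: "rep a b \<alpha> \<beta> 1 (\<lambda>x y. k1 * (\<alpha>*x^2 + \<beta>*x*y + \<alpha>*y^2) + k2 * (a*x^2 + b*x*y + a*y^2))"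
  unfolding rep_def by (rule exI[of _ "\<lambda>r. if r = 0 then k1 else k2"]) (simp add: atMost_Suc)

fun R :: "(complex \<Rightarrow> complex \<Rightarrow> complex) \<Rightarrow> (complex \<Rightarrow> complex \<Rightarrow> complex) \<Rightarrow> nat \<Rightarrow> complex \<Rightarrow> complex \<Rightarrow> complex" where
  "R f0 f1 0 x y = f0 x y"
| "R f0 f1 (Suc 0) x y = f1 x y"
| "R f0 f1 (Suc (Suc m)) x y = (x^2 + y^2) * R f0 f1 (Suc m) x y - (x*y)^2 * R f0 f1 m x y"

lemma R_id:
  assumes "z * f0 x y = A + B" "z * f1 x y = A * x^2 + B * y^2"
  shows "z * R f0 f1 m x y = A * x^(2*m) + B * y^(2*m)"
proof (induction m rule: less_induct)
  case (less m)
  show ?case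
  proof (cases m)
    case 0 then show ?thesis using assms by simp
  next
    case (Suc k) note k = this
    show ?thesis
    proof (cases k)
      case 0 then show ?thesis using assms k by simp
    next
      case (Suc j)
      have h1: "z * R f0 f1 (Suc j) x y = A * x^(2*Suc j) + B * y^(2*Suc j)" using less k Suc by simp
      have h0: "z * R f0 f1 j x y = A * x^(2*j) + B * y^(2*j)" using less k Suc by simp
      have "z * R f0 f1 m x y = (x^2 + y^2) * (z * R f0 f1 (Suc j) x y) - (x*y)^2 * (z * R f0 f1 j x y)"
        using k Suc by (simp add: algebra_simps)
      also have "\<dots> = A * x^(2*m) + B * y^(2*m)"
        unfolding h1 h0 using k Suc by (simp add: algebra_simps power_add power_mult_distrib power2_eq_square flip: power_mult)
      finally show ?thesis .
    qed
  qed
qed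

lemma rep_R:
  assumes D: "D = \<beta>*a - \<alpha>*b" and r0: "rep a b \<alpha> \<beta> 0 f0" and r1: "rep a b \<alpha> \<beta> 1 (\<lambda>x y. D * f1 x y)"
  shows "rep a b \<alpha> \<beta> m (\<lambda>x y. D^m * R f0 f1 m x y)"
proof (induction m rule: less_induct)
  case (less m)
  show ?case
  proof (cases m)
    case 0 then show ?thesis using r0 by simp
  next
    case (Suc k) note k = this
    show ?thesis
    proof (cases k)
      case 0 then show ?thesis using r1 k by simp
    next
      case (Suc j)
      have h1: "rep a b \<alpha> \<beta> (Suc j) (\<lambda>x y. D^(Suc j) * R f0 f1 (Suc j) x y)" by (rule less.IH) (simp add: k Suc)
      have h0: "rep a b \<alpha> \<beta> j (\<lambda>x y. D^j * R f0 f1 j x y)" by (rule less.IH) (simp add: k Suc)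
      note g1 = rep_lin[OF h1, of "-b" "\<beta>"]
      note g0 = rep_smult[OF rep_lin[OF rep_lin[OF h0, of a "-\<alpha>"], of a "-\<alpha>"], of "-1"]
      note g = rep_add[OF g1 g0]
      show ?thesis unfolding k Suc
        by (rule rep_cong[OF g]) (simp add: D algebra_simps power2_eq_square)
    qed
  qed
qed

lemma uniq:
  fixes g :: "complex \<Rightarrow> complex \<Rightarrow> complex" and c1 c2 :: "nat \<Rightarrow> complex"
  assumes fin: "finite E"
    and pts: "\<And>t. t \<notin> E \<Longrightarrow> \<exists>x y. \<alpha>*x^2 + \<beta>*x*y + \<alpha>*y^2 = 1 \<and> a*x^2 + b*x*y + a*y^2 = t \<and> g x y \<noteq> 0"
    and eq: "\<And>x y. g x y * (\<Sum>r\<le>m. c1 r * (\<alpha>*x^2 + \<beta>*x*y + \<alpha>*y^2) ^ (m - r) * (a*x^2 + b*x*y + a*y^2) ^ r)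
                 = g x y * (\<Sum>r\<le>m. c2 r * (\<alpha>*x^2 + \<beta>*x*y + \<alpha>*y^2) ^ (m - r) * (a*x^2 + b*x*y + a*y^2) ^ r)"
    and z1: "\<forall>r. m < r \<longrightarrow> c1 r = 0" and z2: "\<forall>r. m < r \<longrightarrow> c2 r = 0"
  shows "c1 = c2"
proof -
  define d where "d r = c1 r - c2 r" for r
  have roots: "(\<Sum>r\<le>m. d r * t^r) = 0" if tE: "t \<notin> E" for t
  proof -
    obtain x y where xy: "\<alpha>*x^2 + \<beta>*x*y + \<alpha>*y^2 = 1" "a*x^2 + b*x*y + a*y^2 = t" "g x y \<noteq> 0"
      using pts[OF tE] by blast
    have "g x y * ((\<Sum>r\<le>m. c1 r * t^r) - (\<Sum>r\<le>m. c2 r * t^r)) = 0"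
      using eq[of x y] unfolding xy(1,2) by (simp add: algebra_simps)
    then show ?thesis using xy(3) by (simp add: d_def sum_subtractf algebra_simps)
  qed
  have "\<forall>i\<le>m. d i = 0"
  proof (rule ccontr)
    assume "\<not> (\<forall>i\<le>m. d i = 0)"
    then have "finite {t. (\<Sum>r\<le>m. d r * t^r) = 0}" using polyfun_finite_roots by blast
    then have "finite ({t. (\<Sum>r\<le>m. d r * t^r) = 0} \<union> E)" using fin by simp
    moreover have "UNIV \<subseteq> {t. (\<Sum>r\<le>m. d r * t^r) = 0} \<union> E" using roots by blast
    ultimately have "finite (UNIV :: complex set)" using finite_subset by blast
    then show False using infinite_UNIV_char_0 by blast
  qed
  then show ?thesis using z1 z2 unfolding d_def by (metis eq_iff_diff_eq_0 not_le ext)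
qed

lemma pts:
  fixes a b \<alpha> \<beta> t :: complex
  assumes D: "\<beta>*a - \<alpha>*b \<noteq> 0"
  shows "\<exists>x y. \<alpha>*x^2 + \<beta>*x*y + \<alpha>*y^2 = 1 \<and> a*x^2 + b*x*y + a*y^2 = t
     \<and> (x+y)^2 = ((\<beta>-2*\<alpha>)*t + (2*a-b)) / (\<beta>*a - \<alpha>*b)
     \<and> (x-y)^2 = ((\<beta>+2*\<alpha>)*t - (b+2*a)) / (\<beta>*a - \<alpha>*b)"
proof -
  define v where "v = (\<beta>*t - b) / (\<beta>*a - \<alpha>*b)"
  define u where "u = (a - \<alpha>*t) / (\<beta>*a - \<alpha>*b)"
  define p where "p = csqrt (v + 2*u)"
  define q where "q = csqrt (v - 2*u)"
  define x where "x = (p+q)/2"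
  define y where "y = (p-q)/2"
  have p2: "p^2 = v + 2*u" and q2: "q^2 = v - 2*u" unfolding p_def q_def by simp_all
  have s: "x^2 + y^2 = v" unfolding x_def y_def using p2 q2 by (simp add: power2_eq_square field_simps)
  have pr: "x*y = u" unfolding x_def y_def using p2 q2 by (simp add: power2_eq_square field_simps)
  have e1: "\<alpha>*x^2 + \<beta>*x*y + \<alpha>*y^2 = \<alpha>*(x^2+y^2) + \<beta>*(x*y)" by (simp add: algebra_simps)
  have e2: "a*x^2 + b*x*y + a*y^2 = a*(x^2+y^2) + b*(x*y)" by (simp add: algebra_simps)
  have e3: "(x+y)^2 = (x^2+y^2) + 2*(x*y)" "(x-y)^2 = (x^2+y^2) - 2*(x*y)" by (simp_all add: power2_eq_square algebra_simps)
  have D2: "\<alpha> * (\<alpha> * (b * b)) + \<beta> * (\<beta> * (a * a)) \<noteq> \<alpha> * (\<beta> * (a * (b * 2)))"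
  proof
    assume "\<alpha> * (\<alpha> * (b * b)) + \<beta> * (\<beta> * (a * a)) = \<alpha> * (\<beta> * (a * (b * 2)))"
    then have "(\<beta>*a - \<alpha>*b)^2 = 0" by (simp add: power2_eq_square algebra_simps)
    then show False using D by simp
  qed
  have f1: "\<alpha>*v + \<beta>*u = 1" unfolding u_def v_def using D D2 by (simp add: field_simps)
  have f2: "a*v + b*u = t" unfolding u_def v_def using D D2 by (simp add: field_simps)
  have f3: "v + 2*u = ((\<beta>-2*\<alpha>)*t + (2*a-b)) / (\<beta>*a - \<alpha>*b)" unfolding u_def v_def using D D2 by (simp add: field_simps)
  have f4: "v - 2*u = ((\<beta>+2*\<alpha>)*t - (b+2*a)) / (\<beta>*a - \<alpha>*b)" unfolding u_def v_def using D D2 by (simp add: field_simps)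
  show ?thesis
    apply (rule exI[of _ x], rule exI[of _ y])
    unfolding e1 e2 e3 s pr using f1 f2 f3 f4 by simp
qed

lemma rec_pow: "x^(Suc (Suc k)) + y^(Suc (Suc k)) = (x+y) * (x^Suc k + y^Suc k) - x*y*(x^k + y^k)"
  "x^(Suc (Suc k)) - y^(Suc (Suc k)) = (x+y) * (x^Suc k - y^Suc k) - x*y*(x^k - y^k)"
  for x y :: complex by (simp_all add: algebra_simps)

lemma psi_xy:
  fixes a b x y p :: complex
  assumes s: "x + y = p" and p2: "p^2 = 2*a - b" and pr: "x*y = a"
  shows "Psi_seq a b n * p^delta n = x^n + y^n"
proof (induction n rule: less_induct)
  case (less n)
  show ?case
  proof (cases n)
    case 0 then show ?thesis by (simp add: delta_def)
  next
    case (Suc k) note k = this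
    show ?thesis
    proof (cases k)
      case 0 then show ?thesis using k s by (simp add: delta_def)
    next
      case (Suc j)
      have h1: "Psi_seq a b (Suc j) * p^delta (Suc j) = x^Suc j + y^Suc j" by (rule less.IH) (simp add: k Suc)
      have h0: "Psi_seq a b j * p^delta j = x^j + y^j" by (rule less.IH) (simp add: k Suc)
      have r: "x^n + y^n = p * (x^Suc j + y^Suc j) - a*(x^j + y^j)" unfolding k Suc rec_pow s pr ..
      show ?thesis
      proof (cases "even j")
        case True
        then have d: "delta (Suc j) = 1" "delta j = 0" "delta n = 0" using k Suc by (auto simp: delta_def)
        have "Psi_seq a b n = p*(p*Psi_seq a b (Suc j)) - a*Psi_seq a b j"
          using d p2 k Suc by (simp add: power2_eq_square mult.assoc[symmetric])
        then show ?thesis using h1 h0 r d by (simp add: mult.commute)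
      next
        case False
        then have "delta (Suc j) = 0" "delta j = 1" "delta n = 1" using k Suc by (auto simp: delta_def)
        then show ?thesis using h1 h0 r k Suc p2 by (simp add: power2_eq_square algebra_simps)
      qed
    qed
  qed
qed

lemma phi_xy:
  fixes a b x y p :: complex
  assumes s: "x + y = p" and p2: "p^2 = 2*a - b" and pr: "x*y = a"
  shows "Phi_seq a b n * (x - y) * p^delta (n - 1) = x^n - y^n"
proof (induction n rule: less_induct)
  case (less n)
  show ?case
  proof (cases n)
    case 0 then show ?thesis by (simp add: delta_def)
  next
    case (Suc k) note k = this
    show ?thesis
    proof (cases k)
      case 0 then show ?thesis using k s by (simp add: delta_def)
    next
      case (Suc j)
      have h1: "Phi_seq a b (Suc j) * (x - y) * p^delta j = x^Suc j - y^Suc j" using less.IH[of "Suc j"] by (simp add: k Suc)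
      have h0: "Phi_seq a b j * (x - y) * p^delta (j - 1) = x^j - y^j" by (rule less.IH) (simp add: k Suc)
      have r: "x^n - y^n = p * (x^Suc j - y^Suc j) - a*(x^j - y^j)" unfolding k Suc rec_pow s pr ..
      show ?thesis
      proof (cases "j = 0")
        case True
        then show ?thesis using k Suc by (simp add: s[symmetric] delta_def power2_eq_square algebra_simps)
      next
        case j0: False
        show ?thesis
        proof (cases "even j")
          case True
          then have d: "delta (Suc (Suc j)) = 0" "delta j = 0" "delta (j - 1) = 1" "delta (n - 1) = 1" using k Suc j0 by (auto simp: delta_def)
          have "Phi_seq a b n * (x-y) * p = p*(Phi_seq a b (Suc j)*(x-y)) - a*(Phi_seq a b j*(x-y)*p)"
            using d k Suc by (simp add: algebra_simps)
          then show ?thesis using h1 h0 r d by simp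
        next
          case False
          then have d: "delta (Suc (Suc j)) = 1" "delta j = 1" "delta (j - 1) = 0" "delta (n - 1) = 0" using k Suc j0 by (auto simp: delta_def)
          have ee: "Phi_seq a b n = (p*p)*Phi_seq a b (Suc j) - a*Phi_seq a b j"
            using d k Suc p2 by (simp add: power2_eq_square)
          have "Phi_seq a b n * (x-y) = p*(Phi_seq a b (Suc j)*(x-y)*p) - a*(Phi_seq a b j*(x-y))"
            unfolding ee by (simp add: algebra_simps)
          then show ?thesis using h1 h0 r d by simp
        qed
      qed
    qed
  qed
qed

lemma exist_from_rep:
  assumes "rep a b \<alpha> \<beta> m G" and "\<And>x y. L x y = g x y * G x y"
  shows "\<exists>c. (\<forall>r. m < r \<longrightarrow> c r = 0) \<and> (\<forall>x y. L x y = g x y * (\<Sum>r\<le>m. c r * (\<alpha>*x^2 + \<beta>*x*y + \<alpha>*y^2) ^ (m - r) * (a*x^2 + b*x*y + a*y^2) ^ r))"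
proof -
  obtain c where c: "\<forall>x y. G x y = (\<Sum>r\<le>m. c r * (\<alpha>*x^2 + \<beta>*x*y + \<alpha>*y^2) ^ (m - r) * (a*x^2 + b*x*y + a*y^2) ^ r)"
    using assms(1) unfolding rep_def by blast
  show ?thesis
  proof (rule exI[of _ "\<lambda>r. if r \<le> m then c r else 0"], intro conjI allI impI)
    fix x y
    show "L x y = g x y * (\<Sum>r\<le>m. (if r \<le> m then c r else 0) * (\<alpha>*x^2 + \<beta>*x*y + \<alpha>*y^2) ^ (m - r) * (a*x^2 + b*x*y + a*y^2) ^ r)"
      using assms(2)[of x y] c by simp
  qed simp
qed

lemma sum_zero_pow: "(\<Sum>r\<le>m. f r * (0::complex)^r) = f 0"
  by (induction m) auto

lemma finE: "c \<noteq> 0 \<Longrightarrow> finite {t::complex. k*t + c = 0}"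
proof -
  assume c: "c \<noteq> 0"
  have "{t::complex. k*t + c = 0} \<subseteq> {-c/k}"
  proof
    fix t assume "t \<in> {t. k*t + c = 0}"
    then have "k*t + c = 0" by simp
    moreover have "k \<noteq> 0" using c \<open>k*t + c = 0\<close> by auto
    ultimately show "t \<in> {-c/k}" by (simp add: field_simps eq_neg_iff_add_eq_0)
  qed
  then show ?thesis using finite_subset by blast
qed

lemma psi_coef:
  fixes a b \<alpha> \<beta> x0 y0 p :: complex
  assumes ab: "2*a - b \<noteq> 0" and D: "\<beta>*a - \<alpha>*b \<noteq> 0"
    and sp: "x0 + y0 = p" "p^2 = 2*a-b" "x0*y0 = a" "p \<noteq> 0"
    and q1: "\<alpha>*x0^2+\<beta>*x0*y0+\<alpha>*y0^2 = \<beta>*a-\<alpha>*b" and q2: "a*x0^2+b*x0*y0+a*y0^2 = 0"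
  shows "Psi_coef a b \<alpha> \<beta> n 0 = Psi_seq a b n"
proof -
  define m where "m = n div 2"
  define P where "P c \<longleftrightarrow> (\<forall>r. m < r \<longrightarrow> c r = 0) \<and> (\<forall>x y::complex. (\<beta>*a - \<alpha>*b) ^ m * (x^n + y^n) =
           (x + y) ^ delta n *
           (\<Sum>r\<le>m. c r * (\<alpha>*x^2 + \<beta>*x*y + \<alpha>*y^2) ^ (m - r) * (a*x^2 + b*x*y + a*y^2) ^ r))" for c
  have Pdef: "Psi_coef a b \<alpha> \<beta> n = (THE c. P c)" unfolding Psi_coef_def P_def m_def ..
  define D where "D = \<beta>*a - \<alpha>*b"
  have ex: "\<exists>c. P c"
  proof (cases "even n")
    case True
    then have nm: "n = 2*m" and dn: "delta n = 0" unfolding m_def delta_def by auto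
    have r1: "rep a b \<alpha> \<beta> 1 (\<lambda>x y. D * (x^2+y^2))"
      by (rule rep_cong[OF rep_one[of a b \<alpha> \<beta> "-b" \<beta>]]) (simp add: D_def algebra_simps)
    note rr = rep_R[OF D_def rep_const r1, of m]
    show ?thesis unfolding P_def D_def[symmetric]
    proof (rule exist_from_rep[OF rr])
      fix x y :: complex
      have "1 * R (\<lambda>x y. 2) (\<lambda>x y. x^2+y^2) m x y = 1 * x^(2*m) + 1 * y^(2*m)"
        by (rule R_id) simp_all
      then show "D ^ m * (x ^ n + y ^ n) = (x + y) ^ delta n * (D ^ m * R (\<lambda>x y. 2) (\<lambda>x y. x^2+y^2) m x y)"
        unfolding dn by (simp add: nm)
    qed
  next
    case False
    then have nm: "n = 2*m+1" and dn: "delta n = 1" unfolding m_def delta_def by auto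
    have r1: "rep a b \<alpha> \<beta> 1 (\<lambda>x y. D * (x^2 - x*y + y^2))"
      by (rule rep_cong[OF rep_one[of a b \<alpha> \<beta> "-b-a" "\<beta>+\<alpha>"]]) (simp add: D_def algebra_simps power2_eq_square)
    note rr = rep_R[OF D_def rep_const r1, of m]
    show ?thesis unfolding P_def D_def[symmetric]
    proof (rule exist_from_rep[OF rr])
      fix x y :: complex
      have "(x+y) * R (\<lambda>x y. 1) (\<lambda>x y. x^2 - x*y + y^2) m x y = x * x^(2*m) + y * y^(2*m)"
        by (rule R_id) (simp_all add: algebra_simps power2_eq_square power3_eq_cube)
      then show "D ^ m * (x ^ n + y ^ n) = (x + y) ^ delta n * (D ^ m * R (\<lambda>x y. 1) (\<lambda>x y. x^2 - x*y + y^2) m x y)"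
        by (simp add: dn) (simp add: nm algebra_simps)
    qed
  qed
  then obtain c where Pc: "P c" by blast
  have uq: "c' = c" if Pc': "P c'" for c'
  proof (rule uniq[where g = "\<lambda>x y. (x + y) ^ delta n" and E = "{t. (\<beta>-2*\<alpha>)*t + (2*a-b) = 0}" and m = m])
    show "finite {t. (\<beta>-2*\<alpha>)*t + (2*a-b) = 0}" by (rule finE[OF ab])
    fix t assume "t \<notin> {t. (\<beta>-2*\<alpha>)*t + (2*a-b) = 0}"
    then have t: "(\<beta>-2*\<alpha>)*t + (2*a-b) \<noteq> 0" by simp
    obtain x y where xy: "\<alpha>*x^2 + \<beta>*x*y + \<alpha>*y^2 = 1" "a*x^2 + b*x*y + a*y^2 = t"
      "(x+y)^2 = ((\<beta>-2*\<alpha>)*t + (2*a-b)) / (\<beta>*a - \<alpha>*b)" using pts[OF D] by blast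
    have "(x+y)^2 \<noteq> 0" using xy(3) t D by simp
    then have "(x + y) ^ delta n \<noteq> 0" by simp
    then show "\<exists>x y. \<alpha>*x^2 + \<beta>*x*y + \<alpha>*y^2 = 1 \<and> a*x^2 + b*x*y + a*y^2 = t \<and> (x + y) ^ delta n \<noteq> 0"
      using xy by blast
  next
    fix x y :: complex
    show "(x + y) ^ delta n * (\<Sum>r\<le>m. c' r * (\<alpha>*x^2 + \<beta>*x*y + \<alpha>*y^2) ^ (m - r) * (a*x^2 + b*x*y + a*y^2) ^ r)
        = (x + y) ^ delta n * (\<Sum>r\<le>m. c r * (\<alpha>*x^2 + \<beta>*x*y + \<alpha>*y^2) ^ (m - r) * (a*x^2 + b*x*y + a*y^2) ^ r)"
      using Pc Pc' unfolding P_def by metis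
  qed (use Pc Pc' in \<open>auto simp: P_def\<close>)
  have th: "(THE c. P c) = c" using Pc uq by (rule the_equality)
  have "(\<beta>*a - \<alpha>*b) ^ m * (x0^n + y0^n) = (x0 + y0) ^ delta n *
           (\<Sum>r\<le>m. c r * (\<alpha>*x0^2 + \<beta>*x0*y0 + \<alpha>*y0^2) ^ (m - r) * (a*x0^2 + b*x0*y0 + a*y0^2) ^ r)"
    using Pc unfolding P_def by blast
  also have "\<dots> = p ^ delta n * (c 0 * (\<beta>*a - \<alpha>*b) ^ m)"
    unfolding q1 q2 sp(1) using sum_zero_pow[where m=m and f="\<lambda>r. c r * (\<beta>*a - \<alpha>*b) ^ (m - r)"] by simp
  finally have e1: "(\<beta>*a - \<alpha>*b) ^ m * (x0^n + y0^n) = p ^ delta n * (c 0 * (\<beta>*a - \<alpha>*b) ^ m)" .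
  have e2: "Psi_seq a b n * p^delta n = x0^n + y0^n" by (rule psi_xy[OF sp(1-3)])
  have "(\<beta>*a - \<alpha>*b) ^ m * (Psi_seq a b n * p^delta n) = p ^ delta n * (c 0 * (\<beta>*a - \<alpha>*b) ^ m)"
    using e1 e2 by simp
  then have "((\<beta>*a - \<alpha>*b) ^ m * p ^ delta n) * Psi_seq a b n = ((\<beta>*a - \<alpha>*b) ^ m * p ^ delta n) * c 0"
    by (simp add: ac_simps)
  then have "Psi_seq a b n = c 0" using D sp(4) by simp
  then show ?thesis using Pdef th by simp
qed

lemma phi_coef:
  fixes a b \<alpha> \<beta> x0 y0 p :: complex
  assumes ab: "2*a - b \<noteq> 0" and ab2: "b + 2*a \<noteq> 0" and D: "\<beta>*a - \<alpha>*b \<noteq> 0" and n1: "n \<ge> 1"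
    and sp: "x0 + y0 = p" "p^2 = 2*a-b" "x0*y0 = a" "p \<noteq> 0" "x0 - y0 \<noteq> 0"
    and q1: "\<alpha>*x0^2+\<beta>*x0*y0+\<alpha>*y0^2 = \<beta>*a-\<alpha>*b" and q2: "a*x0^2+b*x0*y0+a*y0^2 = 0"
  shows "Phi_coef a b \<alpha> \<beta> n 0 = Phi_seq a b n"
proof -
  define m where "m = (n - 1) div 2"
  define P where "P c \<longleftrightarrow> (\<forall>r. m < r \<longrightarrow> c r = 0) \<and> (\<forall>x y::complex. (\<beta>*a - \<alpha>*b) ^ m * (x^n - y^n) =
           (x - y) * (x + y) ^ delta (n - 1) *
           (\<Sum>r\<le>m. c r * (\<alpha>*x^2 + \<beta>*x*y + \<alpha>*y^2) ^ (m - r) * (a*x^2 + b*x*y + a*y^2) ^ r))" for c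
  have Pdef: "Phi_coef a b \<alpha> \<beta> n = (THE c. P c)" unfolding Phi_coef_def P_def m_def ..
  define D where "D = \<beta>*a - \<alpha>*b"
  have ex: "\<exists>c. P c"
  proof (cases "even (n - 1)")
    case True
    then have nm: "n = 2*m+1" and dn: "delta (n - 1) = 0" using n1 unfolding m_def delta_def by auto
    have r1: "rep a b \<alpha> \<beta> 1 (\<lambda>x y. D * (x^2 + x*y + y^2))"
      by (rule rep_cong[OF rep_one[of a b \<alpha> \<beta> "a-b" "\<beta>-\<alpha>"]]) (simp add: D_def algebra_simps power2_eq_square)
    note rr = rep_R[OF D_def rep_const r1, of m]
    show ?thesis unfolding P_def D_def[symmetric]
    proof (rule exist_from_rep[OF rr])
      fix x y :: complex
      have "(x-y) * R (\<lambda>x y. 1) (\<lambda>x y. x^2 + x*y + y^2) m x y = x * x^(2*m) + (-y) * y^(2*m)"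
        by (rule R_id) (simp_all add: algebra_simps power2_eq_square power3_eq_cube)
      then have hh: "x^n - y^n = (x-y) * R (\<lambda>x y. 1) (\<lambda>x y. x^2 + x*y + y^2) m x y" by (simp add: nm)
      show "D ^ m * (x ^ n - y ^ n) = (x - y) * (x + y) ^ delta (n - 1) * (D ^ m * R (\<lambda>x y. 1) (\<lambda>x y. x^2 + x*y + y^2) m x y)"
        unfolding dn hh by (simp add: ac_simps)
    qed
  next
    case False
    then have nm: "n = 2*m+2" and dn: "delta (n - 1) = 1" using n1 unfolding m_def delta_def by auto
    have r1: "rep a b \<alpha> \<beta> 1 (\<lambda>x y. D * (x^2 + y^2))"
      by (rule rep_cong[OF rep_one[of a b \<alpha> \<beta> "-b" \<beta>]]) (simp add: D_def algebra_simps)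
    note rr = rep_R[OF D_def rep_const r1, of m]
    show ?thesis unfolding P_def D_def[symmetric]
    proof (rule exist_from_rep[OF rr])
      fix x y :: complex
      have "((x-y)*(x+y)) * R (\<lambda>x y. 1) (\<lambda>x y. x^2 + y^2) m x y = x^2 * x^(2*m) + (- (y^2)) * y^(2*m)"
        by (rule R_id) (simp_all add: algebra_simps power2_eq_square)
      then have hh: "x^n - y^n = ((x-y)*(x+y)) * R (\<lambda>x y. 1) (\<lambda>x y. x^2 + y^2) m x y" by (simp add: nm power2_eq_square)
      show "D ^ m * (x ^ n - y ^ n) = (x - y) * (x + y) ^ delta (n - 1) * (D ^ m * R (\<lambda>x y. 1) (\<lambda>x y. x^2 + y^2) m x y)"
        unfolding dn hh by (simp add: ac_simps)
    qed
  qed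
  then obtain c where Pc: "P c" by blast
  have uq: "c' = c" if Pc': "P c'" for c'
  proof (rule uniq[where g = "\<lambda>x y. (x - y) * (x + y) ^ delta (n - 1)"
        and E = "{t. (\<beta>-2*\<alpha>)*t + (2*a-b) = 0} \<union> {t. (\<beta>+2*\<alpha>)*t + (-(b+2*a)) = 0}" and m = m])
    show "finite ({t. (\<beta>-2*\<alpha>)*t + (2*a-b) = 0} \<union> {t. (\<beta>+2*\<alpha>)*t + (-(b+2*a)) = 0})"
    proof -
      have "-(b+2*a) \<noteq> 0" using ab2 by (simp add: neg_equal_iff_equal add_eq_0_iff)
      then show ?thesis using finE[OF ab] finE[of "-(b+2*a)" "\<beta>+2*\<alpha>"] by blast
    qed
    fix t assume "t \<notin> {t. (\<beta>-2*\<alpha>)*t + (2*a-b) = 0} \<union> {t. (\<beta>+2*\<alpha>)*t + (-(b+2*a)) = 0}"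
    then have t: "(\<beta>-2*\<alpha>)*t + (2*a-b) \<noteq> 0" "(\<beta>+2*\<alpha>)*t - (b+2*a) \<noteq> 0" by auto
    obtain x y where xy: "\<alpha>*x^2 + \<beta>*x*y + \<alpha>*y^2 = 1" "a*x^2 + b*x*y + a*y^2 = t"
      "(x+y)^2 = ((\<beta>-2*\<alpha>)*t + (2*a-b)) / (\<beta>*a - \<alpha>*b)"
      "(x-y)^2 = ((\<beta>+2*\<alpha>)*t - (b+2*a)) / (\<beta>*a - \<alpha>*b)" using pts[OF D] by blast
    have "(x+y)^2 \<noteq> 0" "(x-y)^2 \<noteq> 0" using xy(3,4) t D by simp_all
    then have "(x - y) * (x + y) ^ delta (n - 1) \<noteq> 0" by simp
    then show "\<exists>x y. \<alpha>*x^2 + \<beta>*x*y + \<alpha>*y^2 = 1 \<and> a*x^2 + b*x*y + a*y^2 = t \<and> (x - y) * (x + y) ^ delta (n - 1) \<noteq> 0"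
      using xy by blast
  next
    fix x y :: complex
    show "(x - y) * (x + y) ^ delta (n - 1) * (\<Sum>r\<le>m. c' r * (\<alpha>*x^2 + \<beta>*x*y + \<alpha>*y^2) ^ (m - r) * (a*x^2 + b*x*y + a*y^2) ^ r)
        = (x - y) * (x + y) ^ delta (n - 1) * (\<Sum>r\<le>m. c r * (\<alpha>*x^2 + \<beta>*x*y + \<alpha>*y^2) ^ (m - r) * (a*x^2 + b*x*y + a*y^2) ^ r)"
      using Pc Pc' unfolding P_def by metis
  qed (use Pc Pc' in \<open>auto simp: P_def\<close>)
  have th: "(THE c. P c) = c" using Pc uq by (rule the_equality)
  have "(\<beta>*a - \<alpha>*b) ^ m * (x0^n - y0^n) = (x0 - y0) * (x0 + y0) ^ delta (n - 1) *
           (\<Sum>r\<le>m. c r * (\<alpha>*x0^2 + \<beta>*x0*y0 + \<alpha>*y0^2) ^ (m - r) * (a*x0^2 + b*x0*y0 + a*y0^2) ^ r)"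
    using Pc unfolding P_def by blast
  also have "\<dots> = (x0 - y0) * p ^ delta (n - 1) * (c 0 * (\<beta>*a - \<alpha>*b) ^ m)"
    unfolding q1 q2 sp(1) using sum_zero_pow[where m=m and f="\<lambda>r. c r * (\<beta>*a - \<alpha>*b) ^ (m - r)"] by simp
  finally have e1: "(\<beta>*a - \<alpha>*b) ^ m * (x0^n - y0^n) = (x0 - y0) * p ^ delta (n - 1) * (c 0 * (\<beta>*a - \<alpha>*b) ^ m)" .
  have e2: "Phi_seq a b n * (x0 - y0) * p^delta (n - 1) = x0^n - y0^n" by (rule phi_xy[OF sp(1-3)])
  have "(\<beta>*a - \<alpha>*b) ^ m * (Phi_seq a b n * (x0 - y0) * p^delta (n - 1)) = (x0 - y0) * p ^ delta (n - 1) * (c 0 * (\<beta>*a - \<alpha>*b) ^ m)"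
    using e1 e2 by simp
  then have "((\<beta>*a - \<alpha>*b) ^ m * (x0 - y0) * p ^ delta (n - 1)) * Phi_seq a b n = ((\<beta>*a - \<alpha>*b) ^ m * (x0 - y0) * p ^ delta (n - 1)) * c 0"
    by (simp add: ac_simps)
  then have "Phi_seq a b n = c 0" using D sp(4,5) by simp
  then show ?thesis using Pdef th by simp
qed

lemma pow_split: "(p::complex)^n = p^delta n * (p^2)^(n div 2)"
proof -
  have "n = 2*(n div 2) + delta n" unfolding delta_def by auto
  then have "p^n = p^(2*(n div 2) + delta n)" by simp
  also have "\<dots> = p^delta n * (p^2)^(n div 2)" by (simp add: power_add power_mult)
  finally show ?thesis .
qed

theorem theorem5p1:
  fixes a b \<alpha> \<beta> s :: complex and n :: nat
  assumes "2*a - b \<noteq> 0" and "\<beta>*a - \<alpha>*b \<noteq> 0" and "n \<ge> 1"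
    and "s^2 = (b + 2*a) / (b - 2*a)"
  shows "(Psi_coef a b \<alpha> \<beta> n 0 = Psi_seq a b n
       \<and> Psi_seq a b n = (2*a - b) ^ (n div 2) / 2^n * ((1 + s)^n + (1 - s)^n))
    \<and> (b + 2*a \<noteq> 0 \<longrightarrow>
         Phi_coef a b \<alpha> \<beta> n 0 = Phi_seq a b n
       \<and> Phi_seq a b n = (2*a - b) ^ ((n - 1) div 2) / (2^n * s) * ((1 + s)^n - (1 - s)^n))"
proof -
  note ab = assms(1) and D = assms(2) and n1 = assms(3) and s2 = assms(4)
  define p where "p = csqrt (2*a - b)"
  define x0 where "x0 = p*(1+s)/2"
  define y0 where "y0 = p*(1-s)/2"
  have p2: "p^2 = 2*a - b" unfolding p_def by simp
  have p0: "p \<noteq> 0" using ab unfolding p_def by simp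
  have sum0: "x0 + y0 = p" unfolding x0_def y0_def by (simp add: field_simps)
  have dif0: "x0 - y0 = p*s" unfolding x0_def y0_def by (simp add: field_simps)
  have ba: "b - 2*a \<noteq> 0" using ab by (metis eq_iff_diff_eq_0 right_minus_eq)
  have s2': "1 - s^2 = -4*a/(b - 2*a)" using s2 ba by (simp add: field_simps)
  have "x0*y0 = p^2 * (1 - s^2) / 4" unfolding x0_def y0_def by (simp add: power2_eq_square algebra_simps)
  also have "\<dots> = a" unfolding p2 s2' using ba by (simp add: field_simps)
  finally have pr0: "x0*y0 = a" .
  have sq0: "x0^2 + y0^2 = -b" proof -
    have "x0^2 + y0^2 = (x0+y0)^2 - 2*(x0*y0)" by (simp add: power2_eq_square algebra_simps)
    then show ?thesis unfolding sum0 pr0 p2 by simp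
  qed
  have q1: "\<alpha>*x0^2+\<beta>*x0*y0+\<alpha>*y0^2 = \<beta>*a-\<alpha>*b"
  proof -
    have "\<alpha>*x0^2+\<beta>*x0*y0+\<alpha>*y0^2 = \<alpha>*(x0^2+y0^2) + \<beta>*(x0*y0)" by (simp add: algebra_simps)
    then show ?thesis unfolding sq0 pr0 by simp
  qed
  have q2: "a*x0^2+b*x0*y0+a*y0^2 = 0"
  proof -
    have "a*x0^2+b*x0*y0+a*y0^2 = a*(x0^2+y0^2) + b*(x0*y0)" by (simp add: algebra_simps)
    then show ?thesis unfolding sq0 pr0 by simp
  qed
  have pw: "x0^n = p^n/2^n * (1+s)^n" "y0^n = p^n/2^n * (1-s)^n"
    unfolding x0_def y0_def by (simp_all add: power_mult_distrib power_divide)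
  have part1: "Psi_coef a b \<alpha> \<beta> n 0 = Psi_seq a b n
       \<and> Psi_seq a b n = (2*a - b) ^ (n div 2) / 2^n * ((1 + s)^n + (1 - s)^n)"
  proof
    show "Psi_coef a b \<alpha> \<beta> n 0 = Psi_seq a b n"
      by (rule psi_coef[OF ab D sum0 p2 pr0 p0 q1 q2])
    have e: "Psi_seq a b n * p^delta n = x0^n + y0^n" by (rule psi_xy[OF sum0 p2 pr0])
    also have "\<dots> = p^delta n * ((2*a - b) ^ (n div 2) / 2^n * ((1 + s)^n + (1 - s)^n))"
      unfolding pw pow_split[of p n] p2 by (simp add: algebra_simps add_divide_distrib)
    finally have "p^delta n * Psi_seq a b n = p^delta n * ((2*a - b) ^ (n div 2) / 2^n * ((1 + s)^n + (1 - s)^n))"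
      by (simp only: mult.commute)
    then show "Psi_seq a b n = (2*a - b) ^ (n div 2) / 2^n * ((1 + s)^n + (1 - s)^n)"
      using p0 by (simp only: mult_cancel_left power_eq_0_iff) simp
  qed
  have part2: "Phi_coef a b \<alpha> \<beta> n 0 = Phi_seq a b n
       \<and> Phi_seq a b n = (2*a - b) ^ ((n - 1) div 2) / (2^n * s) * ((1 + s)^n - (1 - s)^n)"
    if ab2: "b + 2*a \<noteq> 0"
  proof
    have sn: "s \<noteq> 0" using s2 ab2 ba by auto
    have d0: "x0 - y0 \<noteq> 0" using dif0 p0 sn by simp
    show "Phi_coef a b \<alpha> \<beta> n 0 = Phi_seq a b n"
      by (rule phi_coef[OF ab ab2 D n1 sum0 p2 pr0 p0 d0 q1 q2])
    have pn: "p^n = p * p^(n-1)" using n1 by (metis Suc_diff_1 less_le_trans zero_less_one power_Suc)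
    have "Phi_seq a b n * (p*s) * p^delta (n - 1) = x0^n - y0^n" using phi_xy[OF sum0 p2 pr0, of n] dif0 by simp
    also have "\<dots> = (p * p^delta (n - 1)) * s * ((2*a - b) ^ ((n - 1) div 2) / (2^n * s) * ((1 + s)^n - (1 - s)^n))"
      unfolding pw pn pow_split[of p "n - 1"] p2 using sn by (simp add: field_simps)
    finally have "(p * p^delta (n - 1) * s) * Phi_seq a b n = (p * p^delta (n - 1) * s) * ((2*a - b) ^ ((n - 1) div 2) / (2^n * s) * ((1 + s)^n - (1 - s)^n))"
      by (simp add: ac_simps)
    moreover have "p * p^delta (n - 1) * s \<noteq> 0" using p0 sn by simp
    ultimately show "Phi_seq a b n = (2*a - b) ^ ((n - 1) div 2) / (2^n * s) * ((1 + s)^n - (1 - s)^n)"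
      by (simp only: mult_cancel_left) simp
  qed
  show ?thesis using part1 part2 by blast
qed

end
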